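(* The Steiner circumellipse $\mathcal{E}'$ of $T'=P_1'P_2'P_3'$ is centered at $C_2=\left(-\frac{a^2+b^2}{2a}\cos u,-\frac{a^2+b^2}{2b}\sin u\right)$, has axes parallel to the coordinate axes, with semi-axis $\frac{3c^2}{2a}$ in the $x$-direction and $\frac{3c^2}{2b}$ in the $y$-direction. Hence $\mathcal{E}'$ is similar to the copy of $\mathcal{E}$ rotated by $90^\circ$ about $O$, its area $\frac{9\pi c^4}{4ab}$ is independent of $u$, the ratio of the areas of $\mathcal{E}'$ and $\mathcal{E}$ is $\frac{9c^4}{4a^2b^2}$, and $\mathcal{E}'$ is congruent to $\mathcal{E}$ exactly when $a/b=(1+\sqrt{10})/3$.
   Context: Let $a>b>0$ and $c>0$ with $c^2=a^2-b^2$. Let $\mathcal{E}$ be the ellipse $x^2/a^2+y^2/b^2=1$ with center $O=(0,0)$. Fix $u\in\mathbb{R}$. Let $\Delta_u(t)=(x_u(t),y_u(t))$, where $x_u(t)=\frac1a\big(c^2(1+\cos(t+u))\cos t-a^2\cos u\big)$ and $y_u(t)=\frac1b\big(c^2\cos t\sin(t+u)-c^2\sin t-a^2\sin u\big)$ (the negative pedal curve of $\mathcal{E}$ with respect to $M=(a\cos u,b\sin u)$). For $i=1,2,3$ let $t_i=-u/3-2\pi(i-1)/3$ and $P_i'=\Delta_u(t_i)$ (the cusps). The Steiner circumellipse of a triangle is the unique ellipse through its three vertices centered at its centroid. *)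

theory Defs
  imports "HOL-Analysis.Analysis"
begin

text \<open>Negative pedal curve of the ellipse x^2/a^2+y^2/b^2=1 w.r.t. M=(a cos u, b sin u).\<close>
definition neg_pedal :: "real \<Rightarrow> real \<Rightarrow> real \<Rightarrow> real \<Rightarrow> real \<Rightarrow> real \<times> real" where
  "neg_pedal a b c u t =
     ((c^2 * (1 + cos (t + u)) * cos t - a^2 * cos u) / a,
      (c^2 * cos t * sin (t + u) - c^2 * sin t - a^2 * sin u) / b)"

definition cusp :: "real \<Rightarrow> real \<Rightarrow> real \<Rightarrow> real \<Rightarrow> nat \<Rightarrow> real \<times> real" where
  "cusp a b c u i = neg_pedal a b c u (- u / 3 - 2 * pi * (real i - 1) / 3)"

definition axis_ellipse :: "real \<times> real \<Rightarrow> real \<Rightarrow> real \<Rightarrow> (real \<times> real) set" where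
  "axis_ellipse z A B = {p. ((fst p - fst z) / A)^2 + ((snd p - snd z) / B)^2 = 1}"

definition axis_ellipse_region :: "real \<times> real \<Rightarrow> real \<Rightarrow> real \<Rightarrow> (real \<times> real) set" where
  "axis_ellipse_region z A B = {p. ((fst p - fst z) / A)^2 + ((snd p - snd z) / B)^2 \<le> 1}"

definition ellipse_centered_at :: "(real \<times> real) set \<Rightarrow> real \<times> real \<Rightarrow> bool" where
  "ellipse_centered_at S z \<longleftrightarrow>
     (\<exists>A B C. A > 0 \<and> A * C - B^2 > 0 \<and>
        S = {p. A * (fst p - fst z)^2 + 2 * B * (fst p - fst z) * (snd p - snd z)
                + C * (snd p - snd z)^2 = 1})"

definition centroid3 :: "real \<times> real \<Rightarrow> real \<times> real \<Rightarrow> real \<times> real \<Rightarrow> real \<times> real" where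
  "centroid3 P1 P2 P3 = (1/3) *\<^sub>R (P1 + P2 + P3)"

definition steiner_circumellipse ::
    "real \<times> real \<Rightarrow> real \<times> real \<Rightarrow> real \<times> real \<Rightarrow> (real \<times> real) set \<Rightarrow> bool" where
  "steiner_circumellipse P1 P2 P3 S \<longleftrightarrow>
     ellipse_centered_at S (centroid3 P1 P2 P3) \<and> P1 \<in> S \<and> P2 \<in> S \<and> P3 \<in> S"

definition center_C2 :: "real \<Rightarrow> real \<Rightarrow> real \<Rightarrow> real \<times> real" where
  "center_C2 a b u = (- (a^2 + b^2) / (2 * a) * cos u, - (a^2 + b^2) / (2 * b) * sin u)"

definition rot90 :: "real \<times> real \<Rightarrow> real \<times> real" where
  "rot90 p = (- snd p, fst p)"

end

theory Submission
  imports Defs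
begin


lemma area_region:
  fixes A B :: real assumes A: "A > 0" and B: "B > 0"
  shows "measure lborel (axis_ellipse_region z A B) = pi * A * B"
proof -
  define c :: "real\<times>real \<Rightarrow> real" where "c j = (if j = (1,0) then A else B)" for j
  define T where "T x = z + (\<Sum>j\<in>Basis. (c j * (x \<bullet> j)) *\<^sub>R j)" for x :: "real\<times>real"
  have Tx: "T x = (fst z + A * fst x, snd z + B * snd x)" for x
    by (simp add: T_def Basis_prod_def c_def inner_prod_def prod_eq_iff)
  have cnz: "\<And>j. j \<in> Basis \<Longrightarrow> c j \<noteq> 0" using A B by (auto simp: c_def)
  have prodc: "(\<Prod>j\<in>Basis. \<bar>c j\<bar>) = A * B"
    using A B by (auto simp: Basis_prod_def c_def)
  have L: "lborel = density (distr lborel borel T) (\<lambda>_. (\<Prod>j\<in>Basis. \<bar>c j\<bar>))"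
    unfolding T_def by (rule lborel_affine_euclidean[OF cnz])
  have [measurable]: "T \<in> borel \<rightarrow>\<^sub>M borel" by (simp add: T_def[abs_def])
  let ?R = "axis_ellipse_region z A B"
  have closedR: "closed ?R" unfolding axis_ellipse_region_def
    using A B by (intro closed_Collect_le continuous_intros) auto
  hence Rm[measurable]: "?R \<in> sets borel" by (simp add: borel_closed)
  have pre: "T -` ?R = cball 0 1"
    using A B by (auto simp: Tx axis_ellipse_region_def dist_norm norm_prod_def power_divide power_mult_distrib)
  have "emeasure lborel ?R = ennreal (A*B) * emeasure lborel (T -` ?R)"
    apply (subst L)
    using A B by (simp add: emeasure_density emeasure_distr nn_integral_cmult prodc)
  also have "\<dots> = ennreal (A*B) * ennreal pi"
    using emeasure_cball[of 1 "0::real\<times>real"] by (simp add: pre unit_ball_vol_2)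
  finally have "emeasure lborel ?R = ennreal (pi*A*B)"
    using A B by (simp add: ennreal_mult'[symmetric] mult_ac)
  thus ?thesis using A B by (simp add: measure_def)
qed


lemma uniq_alg:
  fixes al be ga x y s :: real
  assumes s: "s^2 = 3" and xy: "x^2 + y^2 = 1"
  and e1: "al * x^2 + 2*be*x*y + ga*y^2 = 1"
  and e2: "al * (-x + s*y)^2 + 2*be*(-x + s*y)*(-y - s*x) + ga*(-y - s*x)^2 = 4"
  and e3: "al * (-x - s*y)^2 + 2*be*(-x - s*y)*(-y + s*x) + ga*(-y + s*x)^2 = 4"
  shows "al = 1 \<and> be = 0 \<and> ga = 1"
proof -
  define C where "C = x^2 - y^2"
  define D where "D = 2*x*y"
  have CD: "C^2 + D^2 = 1" unfolding C_def D_def using xy by algebra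
  have f1: "(al+ga) + (al-ga)*C + 2*be*D = 2"
    using e1 xy unfolding C_def D_def by algebra
  have gen: "2*(al * X^2 + 2*be*X*Y + ga*Y^2) = (al+ga)*(X^2+Y^2) + (al-ga)*(X^2-Y^2) + 2*be*(2*X*Y)" for X Y :: real
    by algebra
  have "(-x + s*y)^2 + (-y - s*x)^2 = (1+s^2)*(x^2+y^2)" by algebra
  hence a20: "(-x + s*y)^2 + (-y - s*x)^2 = 4" using s xy by simp
  have a21: "(-x + s*y)^2 - (-y - s*x)^2 = (1 - s^2) * C - 2* s*D" unfolding C_def D_def by algebra
  have a22: "2*(-x + s*y)*(-y - s*x) = (1 - s^2) * D + 2* s*C" unfolding C_def D_def by algebra
  have "(-x - s*y)^2 + (-y + s*x)^2 = (1+s^2)*(x^2+y^2)" by algebra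
  hence a30: "(-x - s*y)^2 + (-y + s*x)^2 = 4" using s xy by simp
  have a31: "(-x - s*y)^2 - (-y + s*x)^2 = (1 - s^2) * C + 2* s*D" unfolding C_def D_def by algebra
  have a32: "2*(-x - s*y)*(-y + s*x) = (1 - s^2) * D - 2* s*C" unfolding C_def D_def by algebra
  have f2: "4*(al+ga) + (al-ga)*(-2*C - 2* s*D) + 2*be*(-2*D + 2* s*C) = 8"
    using gen[of "-x + s*y" "-y - s*x"] e2 a20 a21 a22 s by simp
  have f3: "4*(al+ga) + (al-ga)*(-2*C + 2* s*D) + 2*be*(-2*D - 2* s*C) = 8"
    using gen[of "-x - s*y" "-y + s*x"] e3 a30 a31 a32 s by simp
  have P: "al + ga = 2" using f1 f2 f3 by (simp add: algebra_simps)
  have g1: "(al-ga)*C + 2*be*D = 0" using f1 P by linarith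
  have "s * (2*be*C - (al-ga)*D) = 0" using f2 f3 by (simp add: algebra_simps)
  moreover have "s \<noteq> 0" using s by auto
  ultimately have g2: "2*be*C - (al-ga)*D = 0" by simp
  have "al - ga = (al-ga)*(C^2+D^2)" using CD by simp
  also have "\<dots> = C*((al-ga)*C + 2*be*D) - D*(2*be*C - (al-ga)*D)" by algebra
  finally have Q: "al - ga = 0" using g1 g2 by simp
  have "2*be = 2*be*(C^2+D^2)" using CD by simp
  also have "\<dots> = D*((al-ga)*C + 2*be*D) + C*(2*be*C - (al-ga)*D)" by algebra
  finally have "2*be = 0" using g1 g2 by simp
  with P Q show ?thesis by simp
qed


lemma sin3: "sin (3*(t::real)) = 3 * sin t - 4 * sin t^3"
proof -
  have "sin (3*t) = sin (2*t + t)" by simp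
  also have "\<dots> = 2 * sin t * cos t * cos t + (cos t ^2 - sin t^2) * sin t"
    unfolding sin_add sin_double cos_double by simp
  also have "\<dots> = 3 * sin t - 4 * sin t^3"
    using sin_cos_squared_add[of t] by algebra
  finally show ?thesis .
qed

lemma poly_x: "(x::real)^2 + y^2 = 1 \<Longrightarrow>
  2*((a2 - b2)*(1 + (x*(4*x^3-3*x) - y*(4*y^3-3*y)))*x - a2*(4*x^3-3*x)) = -(a2+b2)*(4*x^3-3*x) + 3*(a2-b2)*x"
  by algebra

lemma poly_y: "(x::real)^2 + y^2 = 1 \<Longrightarrow>
  2*((a2 - b2)*x*(y*(4*x^3-3*x) + x*(4*y^3-3*y)) - (a2-b2)*y - a2*(4*y^3-3*y)) = -(a2+b2)*(4*y^3-3*y) - 3*(a2-b2)*y"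
  by algebra

lemma pedal_poly:
  assumes a: "a > 0" and b: "b > 0" and c2: "c^2 = a^2 - b^2"
    and cu: "cos u = cos (3*t)" and su: "sin u = - sin (3*t)"
  shows "neg_pedal a b c u t =
    (fst (center_C2 a b u) + 3*c^2/(2*a) * cos t, snd (center_C2 a b u) - 3*c^2/(2*b) * sin t)"
proof -
  have cu': "cos u = 4*cos t^3 - 3*cos t" using cu cos_treble_cos by simp
  have su': "sin u = 4 * sin t^3 - 3 * sin t" using su sin3 by simp
  have sc: "cos t^2 + sin t^2 = 1" by simp
  have x: "(c^2 * (1 + cos (t + u)) * cos t - a^2 * cos u) / a
      = - (a^2 + b^2) / (2 * a) * cos u + 3*c^2/(2*a) * cos t"
  proof -
    have "2*(c^2 * (1 + cos (t + u)) * cos t - a^2 * cos u)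
        = - (a^2 + b^2) * cos u + 3*c^2 * cos t"
      unfolding cos_add cu' su' c2 by (rule poly_x[OF sc])
    thus ?thesis using a by (simp add: field_simps) (metis (no_types, lifting) distrib_left mult.assoc)
  qed
  have y: "(c^2 * cos t * sin (t + u) - c^2 * sin t - a^2 * sin u) / b
      = - (a^2 + b^2) / (2 * b) * sin u - 3*c^2/(2*b) * sin t"
  proof -
    have "2*(c^2 * cos t * sin (t + u) - c^2 * sin t - a^2 * sin u)
        = - (a^2 + b^2) * sin u - 3*c^2 * sin t"
      unfolding sin_add cu' su' c2 by (rule poly_y[OF sc])
    thus ?thesis using b apply (simp add: field_simps)
      apply (drule arg_cong[where f="\<lambda>z. 2*b*b*z"]) by (simp add: algebra_simps)
  qed
  show ?thesis unfolding neg_pedal_def center_C2_def using x y by simp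
qed


lemma c120: "cos (2*pi/3) = -1/2" "sin (2*pi/3) = sqrt 3/2"
  using cos_120 sin_120' by (simp_all add: mult.commute)
lemma c240: "cos (4*pi/3) = -1/2" "sin (4*pi/3) = - sqrt 3/2"
proof -
  have e: "4*pi/3 = pi/3 + pi" by simp
  have "cos (4*pi/3) = cos (pi/3 + pi)" "sin (4*pi/3) = sin (pi/3 + pi)" using e by metis+
  thus "cos (4*pi/3) = -1/2" "sin (4*pi/3) = - sqrt 3/2"
    by (simp_all only: cos_periodic_pi sin_periodic_pi cos_60 sin_60)
qed

lemma cusp_coords:
  fixes a b c u :: real
  assumes a: "a > 0" and b: "b > 0" and c2: "c^2 = a^2 - b^2"
  defines "G \<equiv> center_C2 a b u" and "A0 \<equiv> 3*c^2/(2*a)" and "B0 \<equiv> 3*c^2/(2*b)"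
    and "x \<equiv> cos (-u/3)" and "y \<equiv> sin (-u/3)" and "s \<equiv> sqrt 3"
  shows "cusp a b c u 1 = (fst G + A0*x, snd G - B0*y)"
    and "cusp a b c u 2 = (fst G + A0*((-x + s*y)/2), snd G - B0*((-y - s*x)/2))"
    and "cusp a b c u 3 = (fst G + A0*((-x - s*y)/2), snd G - B0*((-y + s*x)/2))"
proof -
  have t1: "cusp a b c u 1 = neg_pedal a b c u (-u/3)" by (simp add: cusp_def)
  have t2: "cusp a b c u 2 = neg_pedal a b c u (-u/3 - 2*pi/3)" by (simp add: cusp_def)
  have t3: "cusp a b c u 3 = neg_pedal a b c u (-u/3 - 4*pi/3)"
    by (simp add: cusp_def)
  show "cusp a b c u 1 = (fst G + A0*x, snd G - B0*y)"
    unfolding t1 G_def A0_def B0_def x_def y_def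
    by (subst pedal_poly[OF a b c2]) simp_all
  have e2: "3*(-u/3 - 2*pi/3) = -(u + 2*pi)" by simp
  show "cusp a b c u 2 = (fst G + A0*((-x + s*y)/2), snd G - B0*((-y - s*x)/2))"
    unfolding t2 G_def A0_def B0_def x_def y_def s_def
    by (subst pedal_poly[OF a b c2]) (simp_all only: e2 cos_minus sin_minus cos_periodic sin_periodic,
        simp_all add: cos_diff sin_diff c120, simp_all add: field_simps)
  have e3: "3*(-u/3 - 4*pi/3) = -(u + 2*pi + 2*pi)" by simp
  show "cusp a b c u 3 = (fst G + A0*((-x - s*y)/2), snd G - B0*((-y + s*x)/2))"
    unfolding t3 G_def A0_def B0_def x_def y_def s_def
    by (subst pedal_poly[OF a b c2]) (simp_all only: e3 cos_minus sin_minus cos_periodic sin_periodic,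
        simp_all add: cos_diff sin_diff c240, simp_all add: field_simps)
qed


lemma part12:
  fixes a b c u :: real
  assumes a: "a > 0" and b: "b > 0" and c: "c > 0" and c2: "c^2 = a^2 - b^2"
  defines "E' \<equiv> axis_ellipse (center_C2 a b u) (3 * c^2 / (2 * a)) (3 * c^2 / (2 * b))"
  shows "steiner_circumellipse (cusp a b c u 1) (cusp a b c u 2) (cusp a b c u 3) E'
         \<and> (\<forall>S. steiner_circumellipse (cusp a b c u 1) (cusp a b c u 2) (cusp a b c u 3) S
                 \<longrightarrow> S = E')"
proof -
  define G where "G = center_C2 a b u"
  define A0 where "A0 = 3*c^2/(2*a)"
  define B0 where "B0 = 3*c^2/(2*b)"
  define x where "x = cos (-u/3)"
  define y where "y = sin (-u/3)"
  define s where "s = sqrt 3"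
  have A0: "A0 > 0" unfolding A0_def using a c by simp
  have B0: "B0 > 0" unfolding B0_def using b c by simp
  have s: "s^2 = 3" unfolding s_def by simp
  have xy: "x^2 + y^2 = 1" unfolding x_def y_def by simp
  note cc = cusp_coords[OF a b c2, of u, folded G_def A0_def B0_def x_def y_def s_def]
  define X2 where "X2 = -x + s*y"
  define Y2 where "Y2 = -y - s*x"
  define X3 where "X3 = -x - s*y"
  define Y3 where "Y3 = -y + s*x"
  have P1: "cusp a b c u 1 = (fst G + A0*x, snd G - B0*y)" by (rule cc(1))
  have P2: "cusp a b c u 2 = (fst G + A0*(X2/2), snd G - B0*(Y2/2))" unfolding X2_def Y2_def by (rule cc(2))
  have P3: "cusp a b c u 3 = (fst G + A0*(X3/2), snd G - B0*(Y3/2))" unfolding X3_def Y3_def by (rule cc(3))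
  have n2: "X2^2 + Y2^2 = 4"
  proof -
    have "X2^2 + Y2^2 = (1+s^2)*(x^2+y^2)" unfolding X2_def Y2_def by algebra
    thus ?thesis using s xy by simp
  qed
  have n3: "X3^2 + Y3^2 = 4"
  proof -
    have "X3^2 + Y3^2 = (1+s^2)*(x^2+y^2)" unfolding X3_def Y3_def by algebra
    thus ?thesis using s xy by simp
  qed
  have cent: "centroid3 (cusp a b c u 1) (cusp a b c u 2) (cusp a b c u 3) = G"
    unfolding P1 P2 P3 centroid3_def X2_def Y2_def X3_def Y3_def
    by (simp add: prod_eq_iff field_simps)
  have E'eq: "E' = {p. (1/A0^2) * (fst p - fst G)^2 + 2 * 0 * (fst p - fst G) * (snd p - snd G)
                + (1/B0^2) * (snd p - snd G)^2 = 1}"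
    unfolding E'_def axis_ellipse_def G_def[symmetric] A0_def[symmetric] B0_def[symmetric]
    by (simp add: power_divide)
  have ell: "ellipse_centered_at E' G"
    unfolding ellipse_centered_at_def
    apply (rule exI[where x="1/A0^2"], rule exI[where x=0], rule exI[where x="1/B0^2"])
    using A0 B0 E'eq by simp
  have in1: "cusp a b c u 1 \<in> E'" unfolding E'eq P1 using A0 B0 xy
    by (simp add: power_mult_distrib)
  have in2: "cusp a b c u 2 \<in> E'" unfolding E'eq P2 using A0 B0 n2
    by (simp add: power_mult_distrib power_divide) 
  have in3: "cusp a b c u 3 \<in> E'" unfolding E'eq P3 using A0 B0 n3
    by (simp add: power_mult_distrib power_divide)
  have st: "steiner_circumellipse (cusp a b c u 1) (cusp a b c u 2) (cusp a b c u 3) E'"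
    unfolding steiner_circumellipse_def cent using ell in1 in2 in3 by simp
  have un: "S = E'" if "steiner_circumellipse (cusp a b c u 1) (cusp a b c u 2) (cusp a b c u 3) S" for S
  proof -
    from that have "ellipse_centered_at S G" "cusp a b c u 1 \<in> S" "cusp a b c u 2 \<in> S" "cusp a b c u 3 \<in> S"
      unfolding steiner_circumellipse_def cent by auto
    then obtain A B C where SD: "S = {p. A * (fst p - fst G)^2 + 2 * B * (fst p - fst G) * (snd p - snd G)
                + C * (snd p - snd G)^2 = 1}" and m: "cusp a b c u 1 \<in> S" "cusp a b c u 2 \<in> S" "cusp a b c u 3 \<in> S"
      unfolding ellipse_centered_at_def by blast
    define al where "al = A*A0^2"
    define be where "be = - B*A0*B0"
    define ga where "ga = C*B0^2"
    have m1: "A * (A0*x)^2 + 2*B*(A0*x)*(-(B0*y)) + C*(-(B0*y))^2 = 1" using m(1) unfolding SD P1 by simp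
    have m2: "A * (A0*(X2/2))^2 + 2*B*(A0*(X2/2))*(-(B0*(Y2/2))) + C*(-(B0*(Y2/2)))^2 = 1" using m(2) unfolding SD P2 by simp
    have m3: "A * (A0*(X3/2))^2 + 2*B*(A0*(X3/2))*(-(B0*(Y3/2))) + C*(-(B0*(Y3/2)))^2 = 1" using m(3) unfolding SD P3 by simp
    have e1: "al * x^2 + 2*be*x*y + ga*y^2 = 1" using m1 unfolding al_def be_def ga_def by algebra
    have e2: "al * X2^2 + 2*be*X2*Y2 + ga*Y2^2 = 4"
    proof -
      have "al * X2^2 + 2*be*X2*Y2 + ga*Y2^2 = 4 * (A * (A0*(X2/2))^2 + 2*B*(A0*(X2/2))*(-(B0*(Y2/2))) + C*(-(B0*(Y2/2)))^2)"
        unfolding al_def be_def ga_def by (simp add: field_simps power2_eq_square)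
      with m2 show ?thesis by (metis mult.right_neutral)
    qed
    have e3: "al * X3^2 + 2*be*X3*Y3 + ga*Y3^2 = 4"
    proof -
      have "al * X3^2 + 2*be*X3*Y3 + ga*Y3^2 = 4 * (A * (A0*(X3/2))^2 + 2*B*(A0*(X3/2))*(-(B0*(Y3/2))) + C*(-(B0*(Y3/2)))^2)"
        unfolding al_def be_def ga_def by (simp add: field_simps power2_eq_square)
      with m3 show ?thesis by (metis mult.right_neutral)
    qed
    have "al = 1 \<and> be = 0 \<and> ga = 1"
      by (rule uniq_alg[OF s xy e1 e2[unfolded X2_def Y2_def] e3[unfolded X3_def Y3_def]])
    hence "A = 1/A0^2" "B = 0" "C = 1/B0^2" using A0 B0 unfolding al_def be_def ga_def
      by (auto simp: field_simps)
    thus "S = E'" unfolding SD E'eq by simp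
  qed
  show ?thesis using st un by blast
qed


lemma ell_poly:
  fixes A B X Y :: real assumes "A > 0" "B > 0"
  shows "(X/A)^2 + (Y/B)^2 = 1 \<longleftrightarrow> B^2*X^2 + A^2*Y^2 = A^2*B^2"
  using assms by (simp add: power_divide field_simps) (auto simp: algebra_simps)

lemma ell_norm:
  fixes A B X Y :: real assumes "0 < A" "A \<le> B" "B^2*X^2 + A^2*Y^2 = A^2*B^2"
  shows "X^2 + Y^2 \<le> B^2"
proof -
  have "A^2 * (X^2 + Y^2) \<le> A^2 * B^2"
  proof -
    have "A^2*X^2 \<le> B^2*X^2" using assms by (intro mult_right_mono power_mono) auto
    thus ?thesis using assms(3) by (simp add: algebra_simps)
  qed
  thus ?thesis using assms by (simp add: mult_le_cancel_left)
qed

lemma dist_sq: "(dist p q)^2 = (fst p - fst q)^2 + (snd p - snd q)^2" for p q :: "real \<times> real"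
  by (simp add: dist_prod_def dist_real_def)

lemma sim_lemma:
  fixes a b k A0 B0 :: real and G :: "real \<times> real"
  assumes a: "a > 0" and b: "b > 0" and k: "k > 0" and kb: "k*b = A0" and ka: "k*a = B0"
  shows "axis_ellipse G A0 B0 = (\<lambda>p. G + k *\<^sub>R p) ` (rot90 ` axis_ellipse (0,0) a b)"
proof -
  have A0: "A0 > 0" using kb k b by auto
  have B0: "B0 > 0" using ka k a by auto
  have r1: "(k*z)/A0 = z/b" for z using kb[symmetric] k b by simp
  have r2: "(k*z)/B0 = z/a" for z using ka[symmetric] k a by simp
  show ?thesis
  proof (rule set_eqI, rule iffI)
    fix q assume q: "q \<in> axis_ellipse G A0 B0"
    define p where "p = ((snd q - snd G)/k, -(fst q - fst G)/k)"
    have "p \<in> axis_ellipse (0,0) a b"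
    proof -
      have "(fst p / a)^2 + (snd p / b)^2 = ((snd q - snd G)/B0)^2 + ((fst q - fst G)/A0)^2"
        unfolding p_def using r1[of "(fst q - fst G)/k"] r2[of "(snd q - snd G)/k"] k kb[symmetric] ka[symmetric]
        by (simp add: power_divide power2_commute[of "fst G"])
      thus ?thesis using q by (simp add: axis_ellipse_def add.commute)
    qed
    moreover have "q = G + k *\<^sub>R rot90 p" using k unfolding p_def rot90_def by (simp add: prod_eq_iff)
    ultimately show "q \<in> (\<lambda>p. G + k *\<^sub>R p) ` (rot90 ` axis_ellipse (0,0) a b)" by blast
  next
    fix q assume "q \<in> (\<lambda>p. G + k *\<^sub>R p) ` (rot90 ` axis_ellipse (0,0) a b)"
    then obtain p where p: "p \<in> axis_ellipse (0,0) a b" and qp: "q = G + k *\<^sub>R rot90 p" by blast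
    have "((fst q - fst G)/A0)^2 + ((snd q - snd G)/B0)^2 = (snd p / b)^2 + (fst p / a)^2"
      unfolding qp rot90_def using r1[of "- snd p"] r2[of "fst p"] by (simp add: power_divide)
    thus "q \<in> axis_ellipse G A0 B0" using p by (simp add: axis_ellipse_def add.commute)
  qed
qed

lemma ratio_iff:
  fixes a b :: real assumes a: "a > b" and b: "b > 0"
  shows "2*a*b = 3*(a^2 - b^2) \<longleftrightarrow> a / b = (1 + sqrt 10)/3"
proof -
  define r where "r = a/b"
  have ar: "a = r*b" unfolding r_def using b by simp
  have r1: "r > 1" unfolding r_def using a b by simp
  have "2*a*b = 3*(a^2 - b^2) \<longleftrightarrow> b^2 * (3*r^2 - 2*r - 3) = 0"
    unfolding ar by (simp add: algebra_simps power2_eq_square) (auto simp: algebra_simps)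
  also have "\<dots> \<longleftrightarrow> 3*r^2 - 2*r - 3 = 0" using b by simp
  also have "\<dots> \<longleftrightarrow> (3*r - 1)^2 = 10" by (simp add: algebra_simps power2_eq_square) (auto simp: algebra_simps)
  also have "\<dots> \<longleftrightarrow> 3*r - 1 = sqrt 10"
  proof
    assume h: "(3*r - 1)^2 = 10"
    have "sqrt 10 = sqrt ((3*r-1)^2)" using h by simp
    also have "\<dots> = 3*r - 1" using r1 by simp
    finally show "3*r - 1 = sqrt 10" by simp
  next
    assume "3*r - 1 = sqrt 10" thus "(3*r - 1)^2 = 10" by simp
  qed
  also have "\<dots> \<longleftrightarrow> r = (1 + sqrt 10)/3" by auto
  finally show ?thesis unfolding r_def .
qed


lemma sq_bound:
  fixes x1 y1 x2 y2 R :: real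
  assumes "x1^2+y1^2 \<le> R^2" "x2^2+y2^2 \<le> R^2"
  shows "(x1-x2)^2+(y1-y2)^2 \<le> 4*R^2"
proof -
  have "(x1-x2)^2 + (x1+x2)^2 = 2*x1^2 + 2*x2^2" "(y1-y2)^2 + (y1+y2)^2 = 2*y1^2 + 2*y2^2"
    by (simp_all add: power2_eq_square algebra_simps)
  moreover have "(x1+x2)^2 \<ge> 0" "(y1+y2)^2 \<ge> 0" by simp_all
  ultimately show ?thesis using assms by linarith
qed

lemma sq_eq:
  fixes x1 y1 x2 y2 R :: real
  assumes "x1^2+y1^2 \<le> R^2" "x2^2+y2^2 \<le> R^2" "(x1-x2)^2+(y1-y2)^2 = 4*R^2"
  shows "x2 = -x1 \<and> y2 = -y1 \<and> x1^2+y1^2 = R^2"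
proof -
  have h: "(x1+x2)^2+(y1+y2)^2 = 2*(x1^2+y1^2) + 2*(x2^2+y2^2) - ((x1-x2)^2+(y1-y2)^2)"
    by (simp add: power2_eq_square algebra_simps)
  have "(x1+x2)^2+(y1+y2)^2 \<le> 0" using h assms by (smt (verit))
  hence "(x1+x2)^2 = 0" "(y1+y2)^2 = 0" by (smt (verit) zero_le_power2)+
  hence e: "x2 = -x1" "y2 = -y1" by simp_all
  have "x1^2 + y1^2 = R^2" using assms(1-3) unfolding e by (simp add: power2_eq_square algebra_simps)
  thus ?thesis using e by simp
qed

lemma cong_dir:
  fixes a b A0 B0 :: real and G :: "real \<times> real" and f :: "real \<times> real \<Rightarrow> real \<times> real"
  assumes b: "b > 0" and ab: "a > b" and A0: "A0 > 0" and AB: "A0 < B0"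
    and f: "\<forall>p q. dist (f p) (f q) = dist p q"
    and img: "f ` axis_ellipse (0,0) a b = axis_ellipse G A0 B0"
  shows "A0 = b \<and> B0 = a"
proof -
  have a: "a > 0" using ab b by simp
  have B0: "B0 > 0" using A0 AB by simp
  have memE: "p \<in> axis_ellipse (0,0) a b \<longleftrightarrow> b^2*(fst p)^2 + a^2*(snd p)^2 = a^2*b^2" for p
    unfolding axis_ellipse_def using ell_poly[OF a b] by simp
  have memE': "q \<in> axis_ellipse G A0 B0 \<longleftrightarrow>
      B0^2*(fst q - fst G)^2 + A0^2*(snd q - snd G)^2 = A0^2*B0^2" for q
    unfolding axis_ellipse_def using ell_poly[OF A0 B0] by simp
  have dd: "(fst (f p) - fst (f q))^2 + (snd (f p) - snd (f q))^2 = (fst p - fst q)^2 + (snd p - snd q)^2" for p q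
    using f dist_sq by metis
  have nE': "(fst q - fst G)^2 + (snd q - snd G)^2 \<le> B0^2" if "q \<in> axis_ellipse G A0 B0" for q
    using ell_norm[OF A0 _ memE'[THEN iffD1, OF that]] AB by simp
  have nE: "(fst p)^2 + (snd p)^2 \<le> a^2" if "p \<in> axis_ellipse (0,0) a b" for p
  proof -
    have "a^2*(snd p)^2 + b^2*(fst p)^2 = b^2*a^2" using memE[THEN iffD1, OF that] by (simp add: algebra_simps)
    from ell_norm[OF b _ this] ab show ?thesis by simp
  qed
  have fin: "f p \<in> axis_ellipse G A0 B0" if "p \<in> axis_ellipse (0,0) a b" for p using img that by blast
  have pa: "(a,0) \<in> axis_ellipse (0,0) a b" and pm: "(-a,0) \<in> axis_ellipse (0,0) a b"
    and p0: "(0,b) \<in> axis_ellipse (0,0) a b" by (simp_all add: memE)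
  define x1 where "x1 = fst (f (a,0)) - fst G"
  define y1 where "y1 = snd (f (a,0)) - snd G"
  define x2 where "x2 = fst (f (-a,0)) - fst G"
  define y2 where "y2 = snd (f (-a,0)) - snd G"
  have n1: "x1^2 + y1^2 \<le> B0^2" using nE'[OF fin[OF pa]] unfolding x1_def y1_def .
  have n2: "x2^2 + y2^2 \<le> B0^2" using nE'[OF fin[OF pm]] unfolding x2_def y2_def .
  have d12: "(x1-x2)^2 + (y1-y2)^2 = 4*a^2"
    using dd[of "(a,0)" "(-a,0)"] unfolding x1_def y1_def x2_def y2_def by (simp add: power2_eq_square)
  have "4*a^2 \<le> 4*B0^2" using sq_bound[OF n1 n2] d12 by simp
  hence aB: "a \<le> B0" using a B0 by (simp add: power_mono_iff)
  have t1: "(fst G, snd G + B0) \<in> axis_ellipse G A0 B0" and t2: "(fst G, snd G - B0) \<in> axis_ellipse G A0 B0"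
    by (simp_all add: memE' power2_eq_square)
  obtain p where p: "p \<in> axis_ellipse (0,0) a b" "f p = (fst G, snd G + B0)" using t1 img by (metis imageE)
  obtain q where q: "q \<in> axis_ellipse (0,0) a b" "f q = (fst G, snd G - B0)" using t2 img by (metis imageE)
  have "4*B0^2 = (fst p - fst q)^2 + (snd p - snd q)^2"
    using dd[of p q] p(2) q(2) by (simp add: power2_eq_square)
  also have "\<dots> \<le> 4*a^2" by (rule sq_bound[OF nE[OF p(1)] nE[OF q(1)]])
  finally have "B0 \<le> a" using a B0 by (simp add: power_mono_iff)
  with aB have Ba: "B0 = a" by simp
  have "x2 = -x1 \<and> y2 = -y1 \<and> x1^2+y1^2 = B0^2"
    by (rule sq_eq[OF n1 n2]) (simp add: d12 Ba)
  hence e2: "x2 = -x1" "y2 = -y1" and nn: "x1^2+y1^2 = B0^2" by auto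
  have m1: "B0^2*x1^2 + A0^2*y1^2 = A0^2*B0^2"
    using memE'[THEN iffD1, OF fin[OF pa]] unfolding x1_def y1_def .
  have "(B0^2 - A0^2) * x1^2 = (B0^2*x1^2 + A0^2*y1^2) - A0^2*(x1^2+y1^2)" by (simp add: algebra_simps)
  also have "\<dots> = 0" unfolding m1 nn by simp
  finally have "(B0^2 - A0^2) * x1^2 = 0" .
  moreover have "B0^2 - A0^2 \<noteq> 0" using A0 AB
    by (metis diff_gt_0_iff_gt less_numeral_extra(3) power_strict_mono zero_le_numeral zero_less_numeral order_less_le)
  ultimately have x10: "x1 = 0" by simp
  have y1sq: "y1^2 = a^2" using nn x10 Ba by simp
  define x0 where "x0 = fst (f (0,b)) - fst G"
  define y0 where "y0 = snd (f (0,b)) - snd G"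
  have d01: "(x0-x1)^2 + (y0-y1)^2 = a^2 + b^2"
    using dd[of "(0,b)" "(a,0)"] unfolding x0_def y0_def x1_def y1_def by (simp add: power2_eq_square)
  have d02: "(x0-x2)^2 + (y0-y2)^2 = a^2 + b^2"
    using dd[of "(0,b)" "(-a,0)"] unfolding x0_def y0_def x2_def y2_def by (simp add: power2_eq_square)
  have "(x0-x1)^2+(y0-y1)^2 - ((x0-x2)^2+(y0-y2)^2) = -4*(y0*y1)"
    unfolding e2 x10 by (simp add: power2_eq_square algebra_simps)
  hence "y0 * y1 = 0" using d01 d02 by linarith
  moreover have "y1 \<noteq> 0" using y1sq a by auto
  ultimately have y00: "y0 = 0" by simp
  have x0sq: "x0^2 = b^2" using d01 y1sq unfolding x10 y00 by (simp add: power2_eq_square algebra_simps)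
  have m0: "B0^2*x0^2 + A0^2*y0^2 = A0^2*B0^2"
    using memE'[THEN iffD1, OF fin[OF p0]] unfolding x0_def y0_def .
  hence "x0^2 = A0^2" using B0 y00 by (simp add: algebra_simps)
  hence "A0^2 = b^2" using x0sq by simp
  hence "A0 = b" using A0 b by (simp add: power2_eq_iff_nonneg)
  with Ba show ?thesis by simp
qed

theorem proposition4p3:
  fixes a b c u :: real
  assumes "a > b" "b > 0" "c > 0" "c^2 = a^2 - b^2"
  defines "E \<equiv> axis_ellipse (0, 0) a b"
    and "E' \<equiv> axis_ellipse (center_C2 a b u) (3 * c^2 / (2 * a)) (3 * c^2 / (2 * b))"
  shows "steiner_circumellipse (cusp a b c u 1) (cusp a b c u 2) (cusp a b c u 3) E'
         \<and> (\<forall>S. steiner_circumellipse (cusp a b c u 1) (cusp a b c u 2) (cusp a b c u 3) S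
                 \<longrightarrow> S = E')
         \<and> (\<exists>k w. k > 0 \<and> E' = (\<lambda>p. w + k *\<^sub>R p) ` (rot90 ` E))
         \<and> measure lborel (axis_ellipse_region (center_C2 a b u) (3 * c^2 / (2 * a)) (3 * c^2 / (2 * b)))
             = 9 * pi * c^4 / (4 * a * b)
         \<and> measure lborel (axis_ellipse_region (center_C2 a b u) (3 * c^2 / (2 * a)) (3 * c^2 / (2 * b)))
             / measure lborel (axis_ellipse_region (0, 0) a b) = 9 * c^4 / (4 * a^2 * b^2)
         \<and> ((\<exists>f :: real \<times> real \<Rightarrow> real \<times> real.
                (\<forall>p q. dist (f p) (f q) = dist p q) \<and> f ` E = E')
             \<longleftrightarrow> a / b = (1 + sqrt 10) / 3)"
proof -
  have ab: "a > b" and b: "b > 0" and c: "c > 0" and c2: "c^2 = a^2 - b^2" using assms by auto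
  have a: "a > 0" using ab b by simp
  define G where "G = center_C2 a b u"
  define A0 where "A0 = 3*c^2/(2*a)"
  define B0 where "B0 = 3*c^2/(2*b)"
  define k where "k = 3*c^2/(2*a*b)"
  have A0: "A0 > 0" unfolding A0_def using a c by simp
  have B0: "B0 > 0" unfolding B0_def using b c by simp
  have AB: "A0 < B0" unfolding A0_def B0_def using a b ab c
    by (intro divide_strict_left_mono) auto
  have k: "k > 0" unfolding k_def using a b c by simp
  have kb: "k*b = A0" unfolding k_def A0_def using b by (simp add: field_simps)
  have ka: "k*a = B0" unfolding k_def B0_def using a by (simp add: field_simps)
  have E'd: "E' = axis_ellipse G A0 B0" unfolding E'_def G_def A0_def B0_def ..
  have P12: "steiner_circumellipse (cusp a b c u 1) (cusp a b c u 2) (cusp a b c u 3) E'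
         \<and> (\<forall>S. steiner_circumellipse (cusp a b c u 1) (cusp a b c u 2) (cusp a b c u 3) S
                 \<longrightarrow> S = E')" unfolding E'_def by (rule part12[OF a b c c2])
  have P3: "\<exists>k w. k > 0 \<and> E' = (\<lambda>p. w + k *\<^sub>R p) ` (rot90 ` E)"
    using sim_lemma[OF a b k kb ka, of G] k unfolding E'd E_def by blast
  have ar1: "measure lborel (axis_ellipse_region (center_C2 a b u) (3 * c^2 / (2 * a)) (3 * c^2 / (2 * b)))
             = 9 * pi * c^4 / (4 * a * b)"
    using area_region[OF A0 B0, of G] a b unfolding G_def A0_def B0_def
    by (simp add: field_simps power2_eq_square power4_eq_xxxx)
  have ar0: "measure lborel (axis_ellipse_region (0, 0) a b) = pi * a * b" by (rule area_region[OF a b])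
  have ar2: "measure lborel (axis_ellipse_region (center_C2 a b u) (3 * c^2 / (2 * a)) (3 * c^2 / (2 * b)))
             / measure lborel (axis_ellipse_region (0, 0) a b) = 9 * c^4 / (4 * a^2 * b^2)"
    unfolding ar1 ar0 using a b by (simp add: field_simps power2_eq_square)
  have P6: "(\<exists>f :: real \<times> real \<Rightarrow> real \<times> real.
                (\<forall>p q. dist (f p) (f q) = dist p q) \<and> f ` E = E')
             \<longleftrightarrow> a / b = (1 + sqrt 10) / 3"
  proof
    assume "\<exists>f :: real \<times> real \<Rightarrow> real \<times> real. (\<forall>p q. dist (f p) (f q) = dist p q) \<and> f ` E = E'"
    then obtain f :: "real \<times> real \<Rightarrow> real \<times> real" where f: "\<forall>p q. dist (f p) (f q) = dist p q" and fE: "f ` E = E'" by blast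
    have "A0 = b \<and> B0 = a"
      by (rule cong_dir[OF b ab A0 AB f]) (use fE in \<open>simp add: E_def E'd\<close>)
    hence "3*c^2 = 2*a*b" unfolding B0_def using b by (simp add: field_simps)
    hence "2*a*b = 3*(a^2 - b^2)" using c2 by simp
    thus "a / b = (1 + sqrt 10) / 3" using ratio_iff[OF ab b] by simp
  next
    assume "a / b = (1 + sqrt 10) / 3"
    hence "2*a*b = 3*(a^2 - b^2)" using ratio_iff[OF ab b] by simp
    hence k1: "k = 1" unfolding k_def using a b c2 by (simp add: field_simps)
    define f where "f p = G + rot90 p" for p
    have "(\<forall>p q. dist (f p) (f q) = dist p q)"
      by (simp add: f_def rot90_def dist_prod_def dist_real_def abs_minus_commute add.commute)
    moreover have "f ` E = E'"
      using sim_lemma[OF a b k kb ka, of G] unfolding E'd E_def k1 f_def by (simp add: image_image)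
    ultimately show "\<exists>f :: real \<times> real \<Rightarrow> real \<times> real. (\<forall>p q. dist (f p) (f q) = dist p q) \<and> f ` E = E'"
      by blast
  qed
  show ?thesis using P12 P3 ar1 ar2 P6 by blast
qed

end
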